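(* Let $G$ be a finite simple connected graph of order $n$ and let $k\ge 2$ be an integer with $k\le n$. Then $W_{tsp,k}(G)\le 2W_k(G)$. Moreover, equality $W_{tsp,k}(G)=2W_k(G)$ holds if and only if one of the following holds: (i) $k=2$; (ii) $k=3$ and $G$ contains no three vertices $u,v,w$ such that $2\max\{d(u,v),d(u,w),d(v,w)\}<d(u,v)+d(u,w)+d(v,w)$ and every choice of three shortest paths between the three pairs $(u,v),(v,w),(w,u)$ consists of pairwise edge-disjoint paths; (iii) $k\ge 4$ and $G$ is a tree.
   Context: For vertices $u,v$, $d(u,v)$ is the graph distance. A walk is a sequence of vertices $(v_1,\dots,v_r)$ with $v_iv_{i+1}\in E(G)$; it is closed if $v_1=v_r$; its length is $r-1$ (the number of edge traversals, counted with multiplicity). For a set $S$ of $k$ vertices, $\mathrm{tsp}_k(S)$ is the length of a shortest closed walk in $G$ visiting all vertices of $S$, and the $k$-TSP-Wiener index is $W_{tsp,k}(G)=\sum_{S\subseteq V,\,|S|=k}\mathrm{tsp}_k(S)$. The Steiner distance $d_k(S)$ is the minimum number of edges of a connected subgraph (equivalently, a subtree) of $G$ containing all vertices of $S$, and the Steiner-Wiener index is $W_k(G)=\sum_{S\subseteq V,\,|S|=k}d_k(S)$. *)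

theory Defs
  imports Main
begin

definition simple_graph :: "'a set \<Rightarrow> 'a set set \<Rightarrow> bool" where
  "simple_graph V E \<longleftrightarrow> finite V \<and>
     (\<forall>e\<in>E. \<exists>u v. u \<in> V \<and> v \<in> V \<and> u \<noteq> v \<and> e = {u, v})"

definition walk_in :: "'a set \<Rightarrow> 'a set set \<Rightarrow> 'a list \<Rightarrow> bool" where
  "walk_in V E xs \<longleftrightarrow> xs \<noteq> [] \<and> set xs \<subseteq> V \<and>
     (\<forall>i. Suc i < length xs \<longrightarrow> {xs ! i, xs ! Suc i} \<in> E)"

definition walk_len :: "'a list \<Rightarrow> nat" where
  "walk_len xs = length xs - 1"

definition walk_edges :: "'a list \<Rightarrow> 'a set set" where
  "walk_edges xs = {{xs ! i, xs ! Suc i} | i. Suc i < length xs}"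

definition connected_graph :: "'a set \<Rightarrow> 'a set set \<Rightarrow> bool" where
  "connected_graph V E \<longleftrightarrow> V \<noteq> {} \<and>
     (\<forall>u\<in>V. \<forall>v\<in>V. \<exists>xs. walk_in V E xs \<and> hd xs = u \<and> last xs = v)"

definition dist :: "'a set \<Rightarrow> 'a set set \<Rightarrow> 'a \<Rightarrow> 'a \<Rightarrow> nat" where
  "dist V E u v = (LEAST l. \<exists>xs. walk_in V E xs \<and> hd xs = u \<and> last xs = v \<and> walk_len xs = l)"

definition shortest_path :: "'a set \<Rightarrow> 'a set set \<Rightarrow> 'a \<Rightarrow> 'a \<Rightarrow> 'a list \<Rightarrow> bool" where
  "shortest_path V E u v xs \<longleftrightarrow> walk_in V E xs \<and> hd xs = u \<and> last xs = v \<and>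
     walk_len xs = dist V E u v"

definition tsp :: "'a set \<Rightarrow> 'a set set \<Rightarrow> 'a set \<Rightarrow> nat" where
  "tsp V E S = (LEAST l. \<exists>xs. walk_in V E xs \<and> hd xs = last xs \<and> S \<subseteq> set xs \<and> walk_len xs = l)"

definition steiner_dist :: "'a set \<Rightarrow> 'a set set \<Rightarrow> 'a set \<Rightarrow> nat" where
  "steiner_dist V E S = (LEAST m. \<exists>H F. H \<subseteq> V \<and> S \<subseteq> H \<and> F \<subseteq> E \<and> (\<forall>e\<in>F. e \<subseteq> H) \<and>
      connected_graph H F \<and> card F = m)"

definition W_tsp :: "'a set \<Rightarrow> 'a set set \<Rightarrow> nat \<Rightarrow> nat" where
  "W_tsp V E k = (\<Sum>S\<in>{S. S \<subseteq> V \<and> card S = k}. tsp V E S)"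

definition W_steiner :: "'a set \<Rightarrow> 'a set set \<Rightarrow> nat \<Rightarrow> nat" where
  "W_steiner V E k = (\<Sum>S\<in>{S. S \<subseteq> V \<and> card S = k}. steiner_dist V E S)"

definition is_cycle :: "'a set \<Rightarrow> 'a set set \<Rightarrow> 'a list \<Rightarrow> bool" where
  "is_cycle V E xs \<longleftrightarrow> 3 \<le> length xs \<and> distinct xs \<and> walk_in V E (xs @ [hd xs])"

definition is_tree :: "'a set \<Rightarrow> 'a set set \<Rightarrow> bool" where
  "is_tree V E \<longleftrightarrow> connected_graph V E \<and> \<not> (\<exists>xs. is_cycle V E xs)"

end

theory Submission
  imports Defs
begin

fun el :: "'a list \<Rightarrow> 'a set list" where
  "el (x # y # xs) = {x, y} # el (y # xs)"
| "el _ = []"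

lemma length_el: "length (el xs) = length xs - 1"
  by (induction xs rule: el.induct) auto

lemma nth_el: "Suc i < length xs \<Longrightarrow> el xs ! i = {xs ! i, xs ! Suc i}"
  by (induction xs arbitrary: i rule: el.induct) (auto simp: nth_Cons split: nat.splits)

lemma set_el: "set (el xs) = walk_edges xs"
  unfolding walk_edges_def
proof (auto simp: set_conv_nth length_el nth_el)
  fix i assume "Suc i < length xs"
  then show "\<exists>ia. {xs ! i, xs ! Suc i} = el xs ! ia \<and> ia < length xs - Suc 0"
    by (intro exI[of _ i]) (simp add: nth_el)
qed

lemma walk_len_el: "walk_len xs = length (el xs)"
  by (simp add: walk_len_def length_el)

lemma walk_in_el: "walk_in V E xs \<longleftrightarrow> xs \<noteq> [] \<and> set xs \<subseteq> V \<and> set (el xs) \<subseteq> E"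
  unfolding walk_in_def set_el walk_edges_def by auto

lemma el_append: "el (xs @ y # ys) = (if xs = [] then [] else el xs @ [{last xs, y}]) @ el (y # ys)"
proof (induction xs)
  case Nil then show ?case by simp
next
  case (Cons a xs) then show ?case by (cases xs) auto
qed

lemma el_join: "xs \<noteq> [] \<Longrightarrow> ys \<noteq> [] \<Longrightarrow> last xs = hd ys \<Longrightarrow> el (xs @ tl ys) = el xs @ el ys"
proof (cases ys)
  case (Cons y ys')
  assume a: "xs \<noteq> []" "last xs = hd ys"
  show ?thesis
  proof (cases ys')
    case Nil then show ?thesis using Cons by simp
  next
    case (Cons z zs) then show ?thesis using `ys = y # ys'` a by (simp add: el_append)
  qed
qed simp

lemma el_rev: "el (rev xs) = rev (el xs)"
proof (induction xs)
  case (Cons a xs) then show ?case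
    by (cases xs) (auto simp: el_append last_rev insert_commute)
qed simp

lemma el_sub: "e \<in> set (el xs) \<Longrightarrow> \<exists>a b. e = {a,b} \<and> a \<in> set xs \<and> b \<in> set xs"
  by (induction xs rule: el.induct) auto

lemma el_subset: "e \<in> set (el xs) \<Longrightarrow> e \<subseteq> set xs"
  using el_sub by fastforce

lemma distinct_el: "distinct xs \<Longrightarrow> distinct (el xs)"
proof (induction xs rule: el.induct)
  case (1 x y xs)
  have "{x,y} \<notin> set (el (y # xs))" using 1(2) el_subset[of "{x,y}" "y#xs"] by auto
  then show ?case using 1 by simp
qed auto

lemma card_el_le: "card (set (el xs)) \<le> walk_len xs"
  by (simp add: walk_len_el card_length)

lemma card_el_distinct: "distinct xs \<Longrightarrow> card (set (el xs)) = walk_len xs"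
  by (simp add: walk_len_el distinct_card distinct_el)

lemma el_take_drop: "i < length xs \<Longrightarrow> el xs = el (take (Suc i) xs) @ el (drop i xs)"
proof -
  assume i: "i < length xs"
  have "xs = take (Suc i) xs @ tl (drop i xs)" by (metis append_take_drop_id drop_Suc tl_drop)
  moreover have "last (take (Suc i) xs) = hd (drop i xs)"
  proof -
    have "length (take (Suc i) xs) = Suc i" using i by simp
    then have "last (take (Suc i) xs) = take (Suc i) xs ! i"
      by (metis diff_Suc_1 last_conv_nth list.size(3) nat.distinct(1))
    then show ?thesis using i by (simp add: hd_drop_conv_nth)
  qed
  moreover have "take (Suc i) xs \<noteq> []" "drop i xs \<noteq> []" using i by auto
  ultimately show ?thesis using el_join[of "take (Suc i) xs" "drop i xs"] by simp
qed

lemma walk_append: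
  assumes "walk_in V E xs" "walk_in V E ys" "last xs = hd ys"
  shows "walk_in V E (xs @ tl ys)" "hd (xs @ tl ys) = hd xs" "last (xs @ tl ys) = last ys"
    "el (xs @ tl ys) = el xs @ el ys" "walk_len (xs @ tl ys) = walk_len xs + walk_len ys"
proof -
  have ne: "xs \<noteq> []" "ys \<noteq> []" using assms walk_in_def by auto
  show e: "el (xs @ tl ys) = el xs @ el ys" using el_join ne assms(3) by blast
  show "hd (xs @ tl ys) = hd xs" using ne by simp
  show "last (xs @ tl ys) = last ys" using ne assms(3)
    by (cases ys) (auto simp: last_append)
  show "walk_in V E (xs @ tl ys)" using assms ne e unfolding walk_in_el
    by (auto dest: list.set_sel(2))
  show "walk_len (xs @ tl ys) = walk_len xs + walk_len ys" using e by (simp add: walk_len_el)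
qed

lemma walk_rev: "walk_in V E xs \<Longrightarrow> walk_in V E (rev xs)"
  by (simp add: walk_in_el el_rev)

lemma walk_len_rev: "walk_len (rev xs) = walk_len xs"
  by (simp add: walk_len_def)

lemma walk_mono: "walk_in H F xs \<Longrightarrow> H \<subseteq> V \<Longrightarrow> F \<subseteq> E \<Longrightarrow> walk_in V E xs"
  by (auto simp: walk_in_el)

lemma subwalk:
  assumes "walk_in V E xs" "i \<le> j" "j < length xs"
  defines "ys \<equiv> drop i (take (Suc j) xs)"
  shows "walk_in V E ys" "hd ys = xs ! i" "last ys = xs ! j" "set ys \<subseteq> set xs"
    "set (el ys) \<subseteq> set (el xs)" "walk_len ys = j - i"
proof -
  have l: "length ys = Suc j - i" using assms by (simp add: ys_def)
  have e1: "el xs = el (take (Suc j) xs) @ el (drop j xs)" using el_take_drop assms by blast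
  have e2: "el (take (Suc j) xs) = el (take (Suc i) (take (Suc j) xs)) @ el ys"
    unfolding ys_def using el_take_drop[of i "take (Suc j) xs"] assms by simp
  show "set (el ys) \<subseteq> set (el xs)" using e1 e2 by auto
  show "set ys \<subseteq> set xs" unfolding ys_def by (meson set_drop_subset set_take_subset subset_trans)
  have "ys \<noteq> []" using l assms(2) by (metis Suc_diff_le length_0_conv nat.distinct(1))
  show "walk_in V E ys" using assms(1) `set ys \<subseteq> set xs` `set (el ys) \<subseteq> set (el xs)` `ys \<noteq> []`
    unfolding walk_in_el by auto
  show "hd ys = xs ! i" unfolding ys_def using assms(2,3) by (simp add: hd_drop_conv_nth)
  have "last ys = ys ! (j - i)" using l `ys \<noteq> []` by (simp add: last_conv_nth)
  also have "\<dots> = xs ! j" unfolding ys_def using assms(2,3) by simp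
  finally show "last ys = xs ! j" .
  show "walk_len ys = j - i" using l by (simp add: walk_len_def)
qed


lemma dist_le: "walk_in V E xs \<Longrightarrow> dist V E (hd xs) (last xs) \<le> walk_len xs"
  unfolding dist_def by (rule Least_le) blast

lemma dist_attained: "walk_in V E xs \<Longrightarrow> hd xs = u \<Longrightarrow> last xs = v \<Longrightarrow> \<exists>P. shortest_path V E u v P"
  unfolding shortest_path_def dist_def by (rule LeastI_ex) blast

lemma shortcut:
  "walk_in V E xs \<Longrightarrow> \<exists>ys. walk_in V E ys \<and> hd ys = hd xs \<and> last ys = last xs \<and> distinct ys \<and>
     set ys \<subseteq> set xs \<and> set (el ys) \<subseteq> set (el xs) \<and> length ys \<le> length xs"
proof (induction "length xs" arbitrary: xs rule: less_induct)
  case less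
  show ?case
  proof (cases "distinct xs")
    case True then show ?thesis using less by blast
  next
    case False
    then obtain as bs cs y where xs: "xs = as @ [y] @ bs @ [y] @ cs" using not_distinct_decomp by blast
    define zs where "zs = as @ y # cs"
    have elxs: "el xs = (if as = [] then [] else el as @ [{last as, y}]) @ (el (y # bs) @ [{last (y#bs), y}]) @ el (y # cs)"
    proof -
      have "el (y # bs @ y # cs) = el (y#bs) @ [{last (y#bs), y}] @ el (y#cs)"
        using el_append[of "y # bs" y cs] by simp
      moreover have "el xs = (if as = [] then [] else el as @ [{last as, y}]) @ el (y # bs @ y # cs)"
        unfolding xs using el_append[of as y "bs @ y # cs"] by simp
      ultimately show ?thesis by simp
    qed
    have elzs: "el zs = (if as = [] then [] else el as @ [{last as, y}]) @ el (y # cs)"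
      unfolding zs_def by (simp add: el_append)
    have s1: "set (el zs) \<subseteq> set (el xs)" using elxs elzs by auto
    have s2: "set zs \<subseteq> set xs" unfolding zs_def xs by auto
    have w: "walk_in V E zs" using less(2) s1 s2 unfolding walk_in_el zs_def by auto
    have h: "hd zs = hd xs" "last zs = last xs" unfolding zs_def xs by (cases as; simp)+
    have "length zs < length xs" unfolding zs_def xs by simp
    then obtain ys where ys: "walk_in V E ys \<and> hd ys = hd zs \<and> last ys = last zs \<and> distinct ys \<and>
     set ys \<subseteq> set zs \<and> set (el ys) \<subseteq> set (el zs) \<and> length ys \<le> length zs"
      using less(1) w by blast
    show ?thesis apply (rule exI[of _ ys]) using ys h s1 s2 `length zs < length xs` by auto
  qed
qed

locale sgraph =
  fixes V :: "'a set" and E :: "'a set set"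
  assumes sg: "simple_graph V E" and cg: "connected_graph V E"
begin

lemma finV: "finite V" using sg unfolding simple_graph_def by blast

lemma edgeE: "e \<in> E \<Longrightarrow> \<exists>u v. u \<in> V \<and> v \<in> V \<and> u \<noteq> v \<and> e = {u, v}"
  using sg unfolding simple_graph_def by blast

lemma finE: "finite E"
proof -
  have "E \<subseteq> Pow V" by (auto dest: edgeE)
  then show ?thesis using finV by (metis finite_Pow_iff finite_subset)
qed

lemma conn: "u \<in> V \<Longrightarrow> v \<in> V \<Longrightarrow> \<exists>xs. walk_in V E xs \<and> hd xs = u \<and> last xs = v"
  using cg unfolding connected_graph_def by blast

lemma sp_ex: "u \<in> V \<Longrightarrow> v \<in> V \<Longrightarrow> \<exists>P. shortest_path V E u v P"
  using conn dist_attained by metis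

lemma sp_walk: "shortest_path V E u v P \<Longrightarrow> walk_in V E P \<and> hd P = u \<and> last P = v \<and> walk_len P = dist V E u v"
  by (simp add: shortest_path_def)

lemma walk_ends: "walk_in V E xs \<Longrightarrow> hd xs \<in> V \<and> last xs \<in> V"
  unfolding walk_in_def by auto

lemma dist_tri: "u \<in> V \<Longrightarrow> v \<in> V \<Longrightarrow> w \<in> V \<Longrightarrow> dist V E u w \<le> dist V E u v + dist V E v w"
proof -
  assume a: "u \<in> V" "v \<in> V" "w \<in> V"
  obtain P Q where P: "shortest_path V E u v P" and Q: "shortest_path V E v w Q" using sp_ex a by metis
  have "dist V E (hd (P @ tl Q)) (last (P @ tl Q)) \<le> walk_len (P @ tl Q)"
    using dist_le walk_append P Q sp_walk by metis
  then show ?thesis using walk_append P Q sp_walk by metis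
qed

lemma dist_sym: "u \<in> V \<Longrightarrow> v \<in> V \<Longrightarrow> dist V E u v = dist V E v u"
proof -
  have "dist V E v u \<le> dist V E u v" if uv: "u \<in> V" "v \<in> V" for u v
  proof -
    obtain P where P: "shortest_path V E u v P" using sp_ex uv by metis
    then show ?thesis using dist_le[OF walk_rev, of V E P] sp_walk[OF P] walk_len_rev
      by (metis hd_rev last_rev)
  qed
  then show "u \<in> V \<Longrightarrow> v \<in> V \<Longrightarrow> dist V E u v = dist V E v u" by (metis le_antisym)
qed

lemma dist_self: "u \<in> V \<Longrightarrow> dist V E u u = 0"
proof -
  assume u: "u \<in> V"
  have "walk_in V E [u]" using u by (simp add: walk_in_def)
  then show ?thesis using dist_le[of V E "[u]"] by (simp add: walk_len_def)
qed

lemma dist_0: "u \<in> V \<Longrightarrow> v \<in> V \<Longrightarrow> dist V E u v = 0 \<Longrightarrow> u = v"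
proof -
  assume a: "u \<in> V" "v \<in> V" "dist V E u v = 0"
  obtain P where P: "shortest_path V E u v P" using sp_ex a by metis
  then have "length P = 1" using sp_walk[OF P] a unfolding walk_len_def walk_in_def
    by (metis One_nat_def Suc_pred length_greater_0_conv)
  then show ?thesis using sp_walk[OF P] by (cases P) auto
qed

lemma walk_nth_dist:
  "walk_in V E xs \<Longrightarrow> i \<le> j \<Longrightarrow> j < length xs \<Longrightarrow> dist V E (xs ! i) (xs ! j) \<le> j - i"
  using subwalk dist_le by metis

lemma nth_in: "walk_in V E xs \<Longrightarrow> i < length xs \<Longrightarrow> xs ! i \<in> V"
  unfolding walk_in_def by auto

lemma sp_nth:
  assumes P: "shortest_path V E u v P" and i: "i < length P"
  shows "dist V E u (P ! i) = i" "dist V E (P ! i) v = walk_len P - i"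
proof -
  have w: "walk_in V E P" "hd P = u" "last P = v" "walk_len P = dist V E u v" using sp_walk P by auto
  have ne: "P \<noteq> []" using w walk_in_def by auto
  have "P ! 0 = u" using w ne by (simp add: hd_conv_nth)
  have "P ! (length P - 1) = v" using w ne by (simp add: last_conv_nth)
  have d1: "dist V E u (P ! i) \<le> i" using walk_nth_dist[OF w(1), of 0 i] i `P ! 0 = u` by simp
  have d2: "dist V E (P ! i) v \<le> walk_len P - i"
    using walk_nth_dist[OF w(1), of i "length P - 1"] i `P ! (length P - 1) = v`
    by (simp add: walk_len_def)
  have "u \<in> V" "v \<in> V" "P ! i \<in> V" using walk_ends w nth_in i by auto
  then have "dist V E u v \<le> dist V E u (P ! i) + dist V E (P ! i) v" using dist_tri by blast
  then show "dist V E u (P ! i) = i" "dist V E (P ! i) v = walk_len P - i"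
    using d1 d2 w(4) i by (simp_all add: walk_len_def)
qed

end

lemma detour:
  assumes conn: "connected_graph H F" and w: "walk_in H F w" and ns: "\<not> H \<subseteq> set w"
  shows "\<exists>w' e y. walk_in H F w' \<and> hd w' = hd w \<and> last w' = last w \<and> set w' = insert y (set w) \<and>
     y \<notin> set w \<and> walk_len w' = walk_len w + 2 \<and> set (el w') = insert e (set (el w)) \<and> e \<notin> set (el w)"
proof -
  obtain z where z: "z \<in> H" "z \<notin> set w" using ns by blast
  have wne: "w \<noteq> []" "set w \<subseteq> H" using w by (auto simp: walk_in_def)
  then have "hd w \<in> H" by auto
  then obtain P where P: "walk_in H F P" "hd P = hd w" "last P = z"
    using conn z unfolding connected_graph_def by blast
  have Pne: "P \<noteq> []" using P by (auto simp: walk_in_def)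
  have ex: "\<exists>i. i < length P \<and> P ! i \<notin> set w"
    using Pne P(3) z(2) by (intro exI[of _ "length P - 1"]) (simp add: last_conv_nth)
  define i where "i = (LEAST i. i < length P \<and> P ! i \<notin> set w)"
  have i: "i < length P" "P ! i \<notin> set w" using LeastI_ex[OF ex] unfolding i_def by auto
  have before: "P ! j \<in> set w" if "j < i" for j
    using not_less_Least[of j "\<lambda>i. i < length P \<and> P ! i \<notin> set w"] that i(1) unfolding i_def by auto
  have "P ! 0 \<in> set w" using P(2) Pne wne by (simp add: hd_conv_nth)
  then have i0: "i \<noteq> 0" using i by (metis)
  define x where "x = P ! (i - 1)"
  define y where "y = P ! i"
  have x: "x \<in> set w" using before i0 unfolding x_def by simp
  have y: "y \<notin> set w" "y \<in> H" using i P(1) unfolding y_def by (auto simp: walk_in_def)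
  have xy: "{x, y} \<in> F" using P(1) i i0 unfolding walk_in_def x_def y_def
    by (metis Suc_pred' bot_nat_0.not_eq_extremum)
  obtain A B where wAB: "w = A @ x # B" using x split_list by metis
  define w' where "w' = A @ x # y # x # B"
  have elw: "el w = (if A = [] then [] else el A @ [{last A, x}]) @ el (x # B)"
    unfolding wAB by (simp add: el_append)
  have elw': "el w' = (if A = [] then [] else el A @ [{last A, x}]) @ {x, y} # {y, x} # el (x # B)"
    unfolding w'_def by (simp add: el_append)
  have e1: "set (el w') = insert {x, y} (set (el w))" using elw elw' by (auto simp: insert_commute)
  have e2: "{x, y} \<notin> set (el w)" using el_subset y(1) by blast
  have s: "set w' = insert y (set w)" unfolding w'_def wAB by auto
  have ww': "walk_in H F w'" using w e1 s y(2) xy unfolding walk_in_el w'_def by auto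
  have "hd w' = hd w" "last w' = last w" unfolding w'_def wAB by (cases A; simp; cases B; simp)+
  moreover have "walk_len w' = walk_len w + 2" unfolding w'_def wAB walk_len_def by simp
  ultimately show ?thesis using e1 e2 s y ww' by blast
qed

lemma greedy:
  assumes conn: "connected_graph H F" and fin: "finite H" and w: "walk_in H F w"
  shows "j \<le> card H - card (set w) \<Longrightarrow> \<exists>w'. walk_in H F w' \<and> hd w' = hd w \<and> last w' = last w \<and>
     set w \<subseteq> set w' \<and> card (set w') = card (set w) + j \<and> walk_len w' = walk_len w + 2 * j \<and>
     card (set (el w')) = card (set (el w)) + j"
proof (induction j)
  case 0 show ?case using w by (intro exI[of _ w]) simp
next
  case (Suc j)
  then have "j \<le> card H - card (set w)" by simp
  with Suc.IH obtain w' where w': "walk_in H F w'" "hd w' = hd w" "last w' = last w"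
     "set w \<subseteq> set w'" "card (set w') = card (set w) + j" "walk_len w' = walk_len w + 2 * j"
     "card (set (el w')) = card (set (el w)) + j" by blast
  have "\<not> H \<subseteq> set w'"
  proof
    assume "H \<subseteq> set w'"
    then have "card H \<le> card (set w')" using card_mono[OF List.finite_set] by blast
    then show False using Suc.prems w'(5) by linarith
  qed
  then obtain w'' e y where w'': "walk_in H F w''" "hd w'' = hd w'" "last w'' = last w'"
     "set w'' = insert y (set w')" "y \<notin> set w'" "walk_len w'' = walk_len w' + 2"
     "set (el w'') = insert e (set (el w'))" "e \<notin> set (el w')"
    using detour[OF conn w'(1)] by blast
  have c1: "card (set w'') = Suc (card (set w'))" using w''(4,5) by simp
  have c2: "card (set (el w'')) = Suc (card (set (el w')))" using w''(7,8) by simp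
  show ?case
    apply (rule exI[of _ w''])
    using w'(1-7) w''(1-4,6) c1 c2 by auto
qed

lemma cover:
  assumes conn: "connected_graph H F" and fin: "finite H"
  shows "\<exists>w. walk_in H F w \<and> hd w = last w \<and> set w = H \<and> walk_len w = 2 * (card H - 1) \<and>
     card (set (el w)) = card H - 1"
proof -
  obtain r where r: "r \<in> H" using conn unfolding connected_graph_def by blast
  have w0: "walk_in H F [r]" using r by (simp add: walk_in_def)
  obtain w where w: "walk_in H F w" "hd w = r" "last w = r" "card (set w) = 1 + (card H - 1)"
     "walk_len w = 2 * (card H - 1)" "card (set (el w)) = card H - 1" "r \<in> set w"
    using greedy[OF conn fin w0, of "card H - 1"] by (auto simp: walk_len_def)
  have "set w \<subseteq> H" using w by (auto simp: walk_in_def)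
  moreover have "card H \<ge> 1" using r fin by (metis One_nat_def card_0_eq empty_iff less_one not_le)
  ultimately have "set w = H" using w(4) fin by (simp add: card_subset_eq)
  then show ?thesis using w by auto
qed

lemma card_conn:
  assumes conn: "connected_graph H F" and fin: "finite H" and finF: "finite F"
  shows "card H \<le> card F + 1"
proof -
  obtain w where w: "walk_in H F w" "card (set (el w)) = card H - 1" using cover[OF conn fin] by blast
  have "set (el w) \<subseteq> F" using w by (auto simp: walk_in_el)
  then have "card H - 1 \<le> card F" using w card_mono finF by metis
  then show ?thesis by simp
qed

lemma cover_len:
  assumes conn: "connected_graph H F" and fin: "finite H" and finF: "finite F"
  shows "\<exists>w. walk_in H F w \<and> hd w = last w \<and> set w = H \<and> walk_len w \<le> 2 * card F"
proof -
  obtain w where w: "walk_in H F w" "hd w = last w" "set w = H" "walk_len w = 2 * (card H - 1)"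
    "card (set (el w)) = card H - 1" using cover[OF conn fin] by blast
  have "set (el w) \<subseteq> F" using w by (auto simp: walk_in_el)
  then have "card H - 1 \<le> card F" using w card_mono finF by metis
  then show ?thesis using w by auto
qed

lemma walk_conn: "walk_in V E xs \<Longrightarrow> connected_graph (set xs) (set (el xs))"
proof -
  assume w: "walk_in V E xs"
  have "\<exists>ys. walk_in (set xs) (set (el xs)) ys \<and> hd ys = a \<and> last ys = b"
    if ab: "a \<in> set xs" "b \<in> set xs" for a b
  proof -
    obtain i where i: "i < length xs" "a = xs ! i" using ab(1) by (auto simp: in_set_conv_nth)
    obtain j where j: "j < length xs" "b = xs ! j" using ab(2) by (auto simp: in_set_conv_nth)
    have k: "walk_in (set xs) (set (el xs)) xs" using w by (auto simp: walk_in_el)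
    show ?thesis
    proof (cases "i \<le> j")
      case True
      note s = subwalk[OF k True j(1)]
      show ?thesis by (rule exI[of _ "drop i (take (Suc j) xs)"]) (use s i j in simp)
    next
      case False
      then have "j \<le> i" by simp
      note s = subwalk[OF k this i(1)]
      show ?thesis by (rule exI[of _ "rev (drop j (take (Suc i) xs))"]) (use s i j walk_rev in \<open>simp add: hd_rev last_rev\<close>)
    qed
  qed
  moreover have "set xs \<noteq> {}" using w by (auto simp: walk_in_def)
  ultimately show ?thesis unfolding connected_graph_def by blast
qed

context sgraph begin

lemma st_ex: "S \<subseteq> V \<Longrightarrow> \<exists>H F. H \<subseteq> V \<and> S \<subseteq> H \<and> F \<subseteq> E \<and> (\<forall>e\<in>F. e \<subseteq> H) \<and>
      connected_graph H F \<and> card F = steiner_dist V E S"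
proof -
  assume S: "S \<subseteq> V"
  have "\<forall>e\<in>E. e \<subseteq> V" using edgeE by blast
  then have "\<exists>m H F. H \<subseteq> V \<and> S \<subseteq> H \<and> F \<subseteq> E \<and> (\<forall>e\<in>F. e \<subseteq> H) \<and> connected_graph H F \<and> card F = m"
    using S cg by blast
  from LeastI_ex[OF this] show ?thesis unfolding steiner_dist_def .
qed

lemma st_le: "H \<subseteq> V \<Longrightarrow> S \<subseteq> H \<Longrightarrow> F \<subseteq> E \<Longrightarrow> (\<forall>e\<in>F. e \<subseteq> H) \<Longrightarrow> connected_graph H F \<Longrightarrow>
   steiner_dist V E S \<le> card F"
  unfolding steiner_dist_def by (rule Least_le) blast

lemma st_walk: "walk_in V E xs \<Longrightarrow> S \<subseteq> set xs \<Longrightarrow> steiner_dist V E S \<le> card (set (el xs))"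
proof -
  assume w: "walk_in V E xs" and S: "S \<subseteq> set xs"
  show ?thesis
  proof (rule st_le[OF _ S _ _ walk_conn[OF w]])
    show "set xs \<subseteq> V" "set (el xs) \<subseteq> E" using w by (auto simp: walk_in_el)
    show "\<forall>e\<in>set (el xs). e \<subseteq> set xs" using el_subset by blast
  qed
qed

lemma st_mono: "X \<subseteq> S \<Longrightarrow> S \<subseteq> V \<Longrightarrow> steiner_dist V E X \<le> steiner_dist V E S"
proof -
  assume XS: "X \<subseteq> S" and S: "S \<subseteq> V"
  obtain H F where HF: "H \<subseteq> V" "S \<subseteq> H" "F \<subseteq> E" "\<forall>e\<in>F. e \<subseteq> H" "connected_graph H F"
     "card F = steiner_dist V E S"
    using st_ex[OF S] by blast
  have "X \<subseteq> H" using XS HF(2) by blast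
  from st_le[OF HF(1) this HF(3,4,5)] show ?thesis using HF(6) by simp
qed

lemma finF: "F \<subseteq> E \<Longrightarrow> finite F"
  using finE finite_subset by blast

lemma st_card: "S \<subseteq> V \<Longrightarrow> card S \<le> steiner_dist V E S + 1"
proof -
  assume S: "S \<subseteq> V"
  obtain H F where HF: "H \<subseteq> V" "S \<subseteq> H" "F \<subseteq> E" "connected_graph H F" "card F = steiner_dist V E S"
    using st_ex[OF S] by blast
  have "finite H" using HF finV finite_subset by blast
  then have "card H \<le> card F + 1" using card_conn HF finF by blast
  moreover have "card S \<le> card H" using HF `finite H` card_mono by blast
  ultimately show ?thesis using HF by simp
qed

lemma tsp_ex: "S \<subseteq> V \<Longrightarrow> \<exists>w. walk_in V E w \<and> hd w = last w \<and> S \<subseteq> set w \<and> walk_len w = tsp V E S"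
proof -
  assume S: "S \<subseteq> V"
  obtain w where "walk_in V E w" "hd w = last w" "set w = V" using cover[OF cg finV] by blast
  then have "\<exists>l w. walk_in V E w \<and> hd w = last w \<and> S \<subseteq> set w \<and> walk_len w = l" using S by blast
  from LeastI_ex[OF this] show ?thesis unfolding tsp_def .
qed

lemma tsp_le: "walk_in V E w \<Longrightarrow> hd w = last w \<Longrightarrow> S \<subseteq> set w \<Longrightarrow> tsp V E S \<le> walk_len w"
  unfolding tsp_def by (rule Least_le) blast

lemma tsp_le_st: "S \<subseteq> V \<Longrightarrow> tsp V E S \<le> 2 * steiner_dist V E S"
proof -
  assume S: "S \<subseteq> V"
  obtain H F where HF: "H \<subseteq> V" "S \<subseteq> H" "F \<subseteq> E" "connected_graph H F" "card F = steiner_dist V E S"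
    using st_ex[OF S] by blast
  have "finite H" using HF finV finite_subset by blast
  moreover have "finite F" using finF HF(3) by blast
  ultimately obtain w where w: "walk_in H F w" "hd w = last w" "set w = H" "walk_len w \<le> 2 * card F"
    using cover_len[OF HF(4)] by blast
  have "walk_in V E w" using walk_mono w HF by blast
  then have "tsp V E S \<le> walk_len w" using tsp_le w HF by blast
  then show ?thesis using w HF by simp
qed

end

lemma walk_hd_nth: "walk_in V E xs \<Longrightarrow> hd xs = xs ! 0"
  by (cases xs) (auto simp: walk_in_def)

lemma walk_last_nth: "walk_in V E xs \<Longrightarrow> last xs = xs ! (length xs - 1)"
  by (cases xs rule: rev_cases) (auto simp: walk_in_def nth_append)

lemma walk_len_length: "walk_len xs = length xs - 1"
  by (simp add: walk_len_def)

context sgraph begin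

lemma closed_three:
  assumes w: "walk_in V E xs" "hd xs = last xs" and pqr: "p \<le> q" "q \<le> r" "r < length xs"
  shows "dist V E (xs!p) (xs!q) + dist V E (xs!q) (xs!r) + dist V E (xs!r) (xs!p) \<le> walk_len xs"
proof -
  let ?L = "length xs - 1"
  have d1: "dist V E (xs!p) (xs!q) \<le> q - p" using walk_nth_dist[OF w(1)] pqr by simp
  have d2: "dist V E (xs!q) (xs!r) \<le> r - q" using walk_nth_dist[OF w(1)] pqr by simp
  have d3: "dist V E (xs!r) (xs!?L) \<le> ?L - r" using walk_nth_dist[OF w(1), of r ?L] pqr by simp
  have d4: "dist V E (xs!0) (xs!p) \<le> p" using walk_nth_dist[OF w(1), of 0 p] pqr by simp
  have eq: "xs ! ?L = xs ! 0" using w walk_hd_nth walk_last_nth by metis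
  have "0 < length xs" "p < length xs" using pqr by auto
  then have inV: "xs!r \<in> V" "xs!0 \<in> V" "xs!p \<in> V" using nth_in[OF w(1)] pqr by auto
  have "dist V E (xs!r) (xs!p) \<le> dist V E (xs!r) (xs!0) + dist V E (xs!0) (xs!p)"
    using dist_tri inV by blast
  then show ?thesis using d1 d2 d3 d4 eq pqr by (simp add: walk_len_def)
qed

lemma closed_three_any:
  assumes w: "walk_in V E xs" "hd xs = last xs" and ijl: "i < length xs" "j < length xs" "l < length xs"
  shows "dist V E (xs!i) (xs!j) + dist V E (xs!j) (xs!l) + dist V E (xs!l) (xs!i) \<le> walk_len xs"
proof -
  have inV: "xs!i \<in> V" "xs!j \<in> V" "xs!l \<in> V" using nth_in w(1) ijl by auto
  have s: "dist V E (xs!i) (xs!j) = dist V E (xs!j) (xs!i)" "dist V E (xs!l) (xs!j) = dist V E (xs!j) (xs!l)"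
    "dist V E (xs!i) (xs!l) = dist V E (xs!l) (xs!i)" using dist_sym inV by auto
  note c = closed_three[OF w]
  show ?thesis
  proof (cases "i \<le> j")
    case ij: True
    show ?thesis
    proof (cases "j \<le> l")
      case True then show ?thesis using c[of i j l] ij ijl by simp
    next
      case jl: False
      show ?thesis
      proof (cases "i \<le> l")
        case True then show ?thesis using c[of i l j] ij jl ijl s by simp
      next
        case False then show ?thesis using c[of l i j] ij jl ijl s by simp
      qed
    qed
  next
    case ij: False
    show ?thesis
    proof (cases "i \<le> l")
      case True then show ?thesis using c[of j i l] ij ijl s by simp
    next
      case il: False
      show ?thesis
      proof (cases "j \<le> l")
        case True then show ?thesis using c[of j l i] ij il ijl s by simp
      next
        case False then show ?thesis using c[of l j i] ij il ijl s by simp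
      qed
    qed
  qed
qed

lemma tsp_triple_ge:
  assumes "u \<in> V" "v \<in> V" "w \<in> V"
  shows "dist V E u v + dist V E v w + dist V E w u \<le> tsp V E {u, v, w}"
proof -
  obtain xs where xs: "walk_in V E xs" "hd xs = last xs" "{u,v,w} \<subseteq> set xs" "walk_len xs = tsp V E {u,v,w}"
    using tsp_ex assms by (metis empty_subsetI insert_subset)
  obtain i j l where "i < length xs" "j < length xs" "l < length xs" "u = xs!i" "v = xs!j" "w = xs!l"
    using xs(3) by (auto simp: in_set_conv_nth)
  then show ?thesis using closed_three_any[OF xs(1,2)] xs(4) by metis
qed

lemma tsp_pair_ge:
  assumes "u \<in> V" "v \<in> V"
  shows "2 * dist V E u v \<le> tsp V E {u, v}"
proof -
  have "dist V E u v + dist V E v v + dist V E v u \<le> tsp V E {u, v, v}" using tsp_triple_ge assms by blast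
  then show ?thesis using dist_self dist_sym assms by simp
qed

lemma tsp_triple_le:
  assumes "u \<in> V" "v \<in> V" "w \<in> V"
  shows "tsp V E {u, v, w} \<le> dist V E u v + dist V E v w + dist V E w u"
proof -
  obtain P1 P2 P3 where P: "shortest_path V E u v P1" "shortest_path V E v w P2" "shortest_path V E w u P3"
    using sp_ex assms by metis
  note p1 = sp_walk[OF P(1)] and p2 = sp_walk[OF P(2)] and p3 = sp_walk[OF P(3)]
  note a1 = walk_append[OF p1[THEN conjunct1] p2[THEN conjunct1]]
  have l12: "last P1 = hd P2" using p1 p2 by simp
  note a2 = walk_append[OF a1(1)[OF l12] p3[THEN conjunct1]]
  have l23: "last (P1 @ tl P2) = hd P3" using a1(3)[OF l12] p2 p3 by simp
  let ?W = "(P1 @ tl P2) @ tl P3"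
  have W: "walk_in V E ?W" "hd ?W = u" "last ?W = u" "walk_len ?W = dist V E u v + dist V E v w + dist V E w u"
    using a2[OF l23] a1[OF l12] p1 p2 p3 by auto
  have "{u, v, w} \<subseteq> set ?W"
  proof -
    have "u \<in> set ?W" "v \<in> set ?W" "w \<in> set ?W"
    proof -
      have ne: "?W \<noteq> []" using W(1) by (auto simp: walk_in_def)
      then show "u \<in> set ?W" using W(2) hd_in_set by metis
      have "P1 \<noteq> []" using p1 by (auto simp: walk_in_def)
      then have "v \<in> set P1" using p1 last_in_set by metis
      then show "v \<in> set ?W" by simp
      have "P2 \<noteq> []" using p2 by (auto simp: walk_in_def)
      then have "w \<in> set (P1 @ tl P2) \<or> (tl P2 = [] \<and> w = v)"
        using p2 by (cases P2) (auto, metis last_in_set)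
      then show "w \<in> set ?W" using `v \<in> set ?W` by auto
    qed
    then show ?thesis by auto
  qed
  then show ?thesis using tsp_le W by metis
qed

lemma tsp_triple:
  assumes "u \<in> V" "v \<in> V" "w \<in> V"
  shows "tsp V E {u, v, w} = dist V E u v + dist V E v w + dist V E w u"
  using tsp_triple_ge tsp_triple_le assms le_antisym by blast

lemma st_pair_le:
  assumes "u \<in> V" "v \<in> V"
  shows "steiner_dist V E {u, v} \<le> dist V E u v"
proof -
  obtain P where P: "shortest_path V E u v P" using sp_ex assms by metis
  note p = sp_walk[OF P]
  have ne: "P \<noteq> []" using p by (auto simp: walk_in_def)
  have "{u, v} \<subseteq> set P" using p ne hd_in_set last_in_set by fastforce
  then have "steiner_dist V E {u, v} \<le> card (set (el P))" using st_walk p by blast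
  also have "\<dots> \<le> walk_len P" by (rule card_el_le)
  finally show ?thesis using p by simp
qed

lemma pair_eq:
  assumes "u \<in> V" "v \<in> V"
  shows "tsp V E {u, v} = 2 * steiner_dist V E {u, v}"
proof -
  have "tsp V E {u, v} \<le> 2 * steiner_dist V E {u, v}" using tsp_le_st assms by simp
  moreover have "2 * steiner_dist V E {u, v} \<le> tsp V E {u, v}"
    using st_pair_le tsp_pair_ge assms by (meson le_trans mult_le_mono2)
  ultimately show ?thesis by simp
qed

lemma median:
  assumes HF: "H \<subseteq> V" "F \<subseteq> E" "connected_graph H F" and uvw: "u \<in> H" "v \<in> H" "w \<in> H"
  shows "\<exists>x\<in>V. dist V E u x + dist V E x v + dist V E w x \<le> card F"
proof -
  obtain Q0 where Q0: "walk_in H F Q0" "hd Q0 = u" "last Q0 = v"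
    using HF(3) uvw unfolding connected_graph_def by blast
  obtain Q1 where Q1: "walk_in H F Q1" "hd Q1 = u" "last Q1 = v" "distinct Q1"
    using shortcut[OF Q0(1)] Q0 by metis
  obtain P where P: "walk_in H F P" "hd P = w" "last P = u"
    using HF(3) uvw unfolding connected_graph_def by blast
  have Pne: "P \<noteq> []" and Q1ne: "Q1 \<noteq> []" using P Q1 by (auto simp: walk_in_def)
  have ex: "\<exists>i. i < length P \<and> P ! i \<in> set Q1"
  proof (intro exI[of _ "length P - 1"] conjI)
    show "length P - 1 < length P" using Pne by simp
    have "P ! (length P - 1) = last P" using Pne by (simp add: last_conv_nth)
    then show "P ! (length P - 1) \<in> set Q1" using P(3) Q1(2) Q1ne hd_in_set by metis
  qed
  define i where "i = (LEAST i. i < length P \<and> P ! i \<in> set Q1)"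
  have i: "i < length P" "P ! i \<in> set Q1" using LeastI_ex[OF ex] unfolding i_def by auto
  have before: "P ! j \<notin> set Q1" if "j < i" for j
    using not_less_Least[of j "\<lambda>i. i < length P \<and> P ! i \<in> set Q1"] that i(1) unfolding i_def by auto
  define x where "x = P ! i"
  define R where "R = take (Suc i) P"
  have R: "walk_in H F R" "hd R = w" "last R = x" "length R = Suc i"
    using subwalk[OF P(1), of 0 i] i P(2) walk_hd_nth[OF P(1)] unfolding R_def x_def by auto
  have disj: "set (el R) \<inter> set (el Q1) = {}"
  proof (rule ccontr)
    assume "set (el R) \<inter> set (el Q1) \<noteq> {}"
    then obtain e where e: "e \<in> set (el R)" "e \<in> set (el Q1)" by blast
    then obtain m where m: "m < length (el R)" "e = el R ! m" by (auto simp: in_set_conv_nth)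
    then have m2: "Suc m < length R" by (simp add: length_el)
    then have "e = {R ! m, R ! Suc m}" using m nth_el by metis
    moreover have "R ! m = P ! m" using m2 R(4) unfolding R_def by simp
    ultimately have "P ! m \<in> set Q1" using el_subset[OF e(2)] by auto
    moreover have "m < i" using m2 R(4) by simp
    ultimately show False using before by blast
  qed
  obtain R2 where R2: "walk_in H F R2" "hd R2 = w" "last R2 = x" "distinct R2" "set (el R2) \<subseteq> set (el R)"
    using shortcut[OF R(1)] R by metis
  have finF: "finite F" using finF HF(2) by blast
  have sub: "set (el Q1) \<union> set (el R2) \<subseteq> F" using Q1(1) R2(1) by (auto simp: walk_in_el)
  have "card (set (el Q1)) + card (set (el R2)) = card (set (el Q1) \<union> set (el R2))"
    using disj R2(5) by (subst card_Un_disjoint) auto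
  also have "\<dots> \<le> card F" using card_mono[OF finF sub] .
  finally have cF: "walk_len Q1 + walk_len R2 \<le> card F"
    using card_el_distinct[OF Q1(4)] card_el_distinct[OF R2(4)] by simp
  have Q1V: "walk_in V E Q1" and R2V: "walk_in V E R2" using walk_mono Q1(1) R2(1) HF by blast+
  obtain m where m: "m < length Q1" "x = Q1 ! m" using i(2) unfolding x_def by (auto simp: in_set_conv_nth)
  have "dist V E (Q1 ! 0) (Q1 ! m) \<le> m" using walk_nth_dist[OF Q1V, of 0 m] m by simp
  moreover have "dist V E (Q1 ! m) (Q1 ! (length Q1 - 1)) \<le> length Q1 - 1 - m"
    using walk_nth_dist[OF Q1V, of m "length Q1 - 1"] m by simp
  moreover have "dist V E w x \<le> walk_len R2" using dist_le[OF R2V] R2 by simp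
  moreover have "Q1 ! 0 = u" "Q1 ! (length Q1 - 1) = v"
    using Q1 walk_hd_nth walk_last_nth by metis+
  moreover have "x \<in> V" using R2V R2(3) walk_ends by blast
  ultimately show ?thesis using cF m by (intro bexI[of _ x]) (auto simp: walk_len_def)
qed

end

lemma conn_union:
  assumes c1: "connected_graph H1 F1" and c2: "connected_graph H2 F2" and z: "z \<in> H1" "z \<in> H2"
  shows "connected_graph (H1 \<union> H2) (F1 \<union> F2)"
proof -
  have m1: "walk_in (H1 \<union> H2) (F1 \<union> F2) xs" if "walk_in H1 F1 xs" for xs
    using walk_mono that by blast
  have m2: "walk_in (H1 \<union> H2) (F1 \<union> F2) xs" if "walk_in H2 F2 xs" for xs
    using walk_mono that by blast
  have r1: "\<exists>xs. walk_in (H1 \<union> H2) (F1 \<union> F2) xs \<and> hd xs = a \<and> last xs = z" if "a \<in> H1 \<union> H2" for a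
  proof (cases "a \<in> H1")
    case True then show ?thesis using c1 z m1 unfolding connected_graph_def by blast
  next
    case False then have "a \<in> H2" using that by blast
    then show ?thesis using c2 z m2 unfolding connected_graph_def by blast
  qed
  have "\<exists>xs. walk_in (H1 \<union> H2) (F1 \<union> F2) xs \<and> hd xs = a \<and> last xs = b"
    if ab: "a \<in> H1 \<union> H2" "b \<in> H1 \<union> H2" for a b
  proof -
    obtain xs where xs: "walk_in (H1 \<union> H2) (F1 \<union> F2) xs" "hd xs = a" "last xs = z" using r1 ab(1) by blast
    obtain ys where ys: "walk_in (H1 \<union> H2) (F1 \<union> F2) ys" "hd ys = b" "last ys = z" using r1 ab(2) by blast
    have "last xs = hd (rev ys)" using xs ys by (simp add: hd_rev)
    note a = walk_append[OF xs(1) walk_rev[OF ys(1)] this]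
    show ?thesis using a xs ys by (intro exI[of _ "xs @ tl (rev ys)"]) (simp add: last_rev)
  qed
  moreover have "H1 \<union> H2 \<noteq> {}" using z by blast
  ultimately show ?thesis unfolding connected_graph_def by blast
qed

context sgraph begin

definition D3 :: "'a \<Rightarrow> 'a \<Rightarrow> 'a \<Rightarrow> nat" where
  "D3 u v w = dist V E u v + dist V E v w + dist V E w u"

definition bad :: "'a \<Rightarrow> 'a \<Rightarrow> 'a \<Rightarrow> bool" where
  "bad u v w \<longleftrightarrow> u \<in> V \<and> v \<in> V \<and> w \<in> V \<and> D3 u v w < 2 * steiner_dist V E {u, v, w}"

definition wit :: "'a \<Rightarrow> 'a \<Rightarrow> 'a \<Rightarrow> bool" where
  "wit u v w \<longleftrightarrow> u \<in> V \<and> v \<in> V \<and> w \<in> V \<and>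
     2 * max (dist V E u v) (max (dist V E u w) (dist V E v w))
            < dist V E u v + dist V E u w + dist V E v w \<and>
          (\<forall>P1 P2 P3. shortest_path V E u v P1 \<and> shortest_path V E v w P2 \<and>
              shortest_path V E w u P3 \<longrightarrow>
             walk_edges P1 \<inter> walk_edges P2 = {} \<and> walk_edges P2 \<inter> walk_edges P3 = {} \<and>
             walk_edges P1 \<inter> walk_edges P3 = {})"

lemma D3_perm:
  assumes "u \<in> V" "v \<in> V" "w \<in> V"
  shows "D3 v u w = D3 u v w" "D3 u w v = D3 u v w"
  using dist_sym assms unfolding D3_def by auto

lemma bad_perm:
  assumes "bad u v w" shows "bad v u w" "bad u w v"
proof -
  have "{v, u, w} = {u, v, w}" "{u, w, v} = {u, v, w}" by auto
  then show "bad v u w" "bad u w v" using assms D3_perm unfolding bad_def by metis+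
qed

lemma sp_rev: "shortest_path V E u v P \<Longrightarrow> shortest_path V E v u (rev P)"
proof -
  assume P: "shortest_path V E u v P"
  note p = sp_walk[OF P]
  have "u \<in> V" "v \<in> V" using p walk_ends by blast+
  then show ?thesis using p walk_rev[of V E P] walk_len_rev[of P] dist_sym[of u v] unfolding shortest_path_def
    by (simp add: hd_rev last_rev)
qed

lemma st3_le:
  assumes "a \<in> V" "b \<in> V" "c \<in> V"
  shows "steiner_dist V E {a, b, c} \<le> dist V E a b + dist V E b c"
proof -
  obtain P1 P2 where P: "shortest_path V E a b P1" "shortest_path V E b c P2" using sp_ex assms by metis
  note p1 = sp_walk[OF P(1)] and p2 = sp_walk[OF P(2)]
  have l: "last P1 = hd P2" using p1 p2 by simp
  note ap = walk_append[OF p1[THEN conjunct1] p2[THEN conjunct1] l]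
  have ne1: "P1 \<noteq> []" and ne2: "P2 \<noteq> []" using p1 p2 by (auto simp: walk_in_def)
  have "a \<in> set (P1 @ tl P2)" using ne1 p1 hd_in_set by fastforce
  moreover have "b \<in> set (P1 @ tl P2)" using ne1 p1 last_in_set by fastforce
  moreover have "c \<in> set (P1 @ tl P2)" using ap(3) p2 ap(1) last_in_set by (metis walk_in_def)
  ultimately have "steiner_dist V E {a, b, c} \<le> card (set (el (P1 @ tl P2)))"
    using st_walk ap(1) by simp
  also have "\<dots> \<le> walk_len (P1 @ tl P2)" by (rule card_el_le)
  finally show ?thesis using ap p1 p2 by simp
qed

lemma D3_le_st: "u \<in> V \<Longrightarrow> v \<in> V \<Longrightarrow> w \<in> V \<Longrightarrow> D3 u v w \<le> 2 * steiner_dist V E {u, v, w}"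
  using tsp_triple tsp_le_st unfolding D3_def by (metis empty_subsetI insert_subset)

lemma wit_strict:
  assumes W: "wit u v w"
  shows "D3 u v w < 2 * steiner_dist V E {u, v, w}"
proof (rule ccontr)
  assume "\<not> ?thesis"
  then have le: "2 * steiner_dist V E {u, v, w} \<le> D3 u v w" by simp
  have uvw: "u \<in> V" "v \<in> V" "w \<in> V" using W wit_def by auto
  obtain H F where HF: "H \<subseteq> V" "{u,v,w} \<subseteq> H" "F \<subseteq> E" "connected_graph H F"
      "card F = steiner_dist V E {u,v,w}"
    using st_ex[of "{u,v,w}"] uvw by auto
  obtain x where x: "x \<in> V" "dist V E u x + dist V E x v + dist V E w x \<le> card F"
  proof -
    have "u \<in> H" "v \<in> H" "w \<in> H" using HF(2) by auto
    then show ?thesis using median[OF HF(1,3,4)] that by blast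
  qed
  have t1: "dist V E u v \<le> dist V E u x + dist V E x v" using dist_tri uvw x by blast
  have t2: "dist V E v w \<le> dist V E v x + dist V E x w" using dist_tri uvw x by blast
  have t3: "dist V E w u \<le> dist V E w x + dist V E x u" using dist_tri uvw x by blast
  have s: "dist V E v x = dist V E x v" "dist V E x w = dist V E w x" "dist V E x u = dist V E u x"
    "dist V E u w = dist V E w u" using dist_sym uvw x by auto
  have e1: "dist V E u v = dist V E x u + dist V E x v"
   and e2: "dist V E v w = dist V E x v + dist V E x w"
   and e3: "dist V E w u = dist V E x w + dist V E x u"
    using t1 t2 t3 s x(2) le HF(5) unfolding D3_def by linarith+
  obtain Ru where Ru: "shortest_path V E x u Ru" using sp_ex[OF x(1) uvw(1)] by blast
  obtain Rv where Rv: "shortest_path V E x v Rv" using sp_ex[OF x(1) uvw(2)] by blast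
  obtain Rw where Rw: "shortest_path V E x w Rw" using sp_ex[OF x(1) uvw(3)] by blast
  note R = Ru Rv Rw
  note ru = sp_walk[OF R(1)] and rv = sp_walk[OF R(2)] and rw = sp_walk[OF R(3)]
  have j: "last (rev Ru) = hd Rv" "last (rev Rw) = hd Ru" using ru rv rw by (simp_all add: last_rev)
  note a1 = walk_append[OF walk_rev[OF ru[THEN conjunct1]] rv[THEN conjunct1] j(1)]
  note a3 = walk_append[OF walk_rev[OF rw[THEN conjunct1]] ru[THEN conjunct1] j(2)]
  have P1: "shortest_path V E u v (rev Ru @ tl Rv)"
  proof -
    have "hd (rev Ru @ tl Rv) = u" using a1(2) ru by (simp add: hd_rev)
    moreover have "last (rev Ru @ tl Rv) = v" using a1(3) rv by simp
    moreover have "walk_len (rev Ru @ tl Rv) = dist V E u v" using a1(5) ru rv e1 walk_len_rev[of Ru] by simp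
    ultimately show ?thesis unfolding shortest_path_def using a1(1) by blast
  qed
  have P3: "shortest_path V E w u (rev Rw @ tl Ru)"
  proof -
    have "hd (rev Rw @ tl Ru) = w" using a3(2) rw by (simp add: hd_rev)
    moreover have "last (rev Rw @ tl Ru) = u" using a3(3) ru by simp
    moreover have "walk_len (rev Rw @ tl Ru) = dist V E w u" using a3(5) ru rw e3 walk_len_rev[of Rw] by simp
    ultimately show ?thesis unfolding shortest_path_def using a3(1) by blast
  qed
  obtain P2 where P2: "shortest_path V E v w P2" using sp_ex[OF uvw(2,3)] by blast
  have all: "\<forall>P1 P2 P3. shortest_path V E u v P1 \<and> shortest_path V E v w P2 \<and>
              shortest_path V E w u P3 \<longrightarrow>
             walk_edges P1 \<inter> walk_edges P2 = {} \<and> walk_edges P2 \<inter> walk_edges P3 = {} \<and>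
             walk_edges P1 \<inter> walk_edges P3 = {}" using W unfolding wit_def by blast
  have "walk_edges (rev Ru @ tl Rv) \<inter> walk_edges (rev Rw @ tl Ru) = {}"
    using all[rule_format, OF conjI[OF P1 conjI[OF P2 P3]]] by blast
  then have "(set (el Ru) \<union> set (el Rv)) \<inter> (set (el Rw) \<union> set (el Ru)) = {}"
    using a1(4) a3(4) by (simp add: set_el[symmetric] el_rev)
  moreover have "set (el Ru) \<subseteq> (set (el Ru) \<union> set (el Rv)) \<inter> (set (el Rw) \<union> set (el Ru))" by blast
  ultimately have "el Ru = []" by (metis set_empty subset_empty)
  then have "walk_len Ru = 0" by (simp add: walk_len_el)
  then have "dist V E x u = 0" using ru by simp
  then have "x = u" using dist_0[OF x(1) uvw(1)] by simp
  then have eq: "dist V E v w = dist V E u v + dist V E u w" using e1 e2 s dist_self[OF uvw(1)] by simp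
  have lt: "2 * max (dist V E u v) (max (dist V E u w) (dist V E v w))
            < dist V E u v + dist V E u w + dist V E v w" using W unfolding wit_def by blast
  have "dist V E v w \<le> max (dist V E u v) (max (dist V E u w) (dist V E v w))" by simp
  then show False using lt eq by linarith
qed

lemma share:
  assumes Y: "shortest_path V E a b Y" and Z: "shortest_path V E a c Z"
    and e: "e \<in> set (el Y)" "e \<in> set (el Z)"
  shows "\<exists>y\<in>V. \<exists>t\<ge>1. dist V E a y = t \<and> dist V E y b + t = dist V E a b \<and> dist V E y c + t = dist V E a c"
proof -
  note y = sp_walk[OF Y] and z = sp_walk[OF Z]
  obtain i where i: "i < length (el Y)" "e = el Y ! i" using e(1) by (auto simp: in_set_conv_nth)
  obtain j where j: "j < length (el Z)" "e = el Z ! j" using e(2) by (auto simp: in_set_conv_nth)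
  have i2: "Suc i < length Y" and j2: "Suc j < length Z" using i j by (auto simp: length_el)
  have ei: "e = {Y ! i, Y ! Suc i}" and ej: "e = {Z ! j, Z ! Suc j}" using i j i2 j2 nth_el by metis+
  have dy: "dist V E a (Y ! i) = i" "dist V E a (Y ! Suc i) = Suc i" "dist V E (Y ! Suc i) b = walk_len Y - Suc i"
    using sp_nth[OF Y] i2 by auto
  have dz: "dist V E a (Z ! j) = j" "dist V E a (Z ! Suc j) = Suc j" "dist V E (Z ! Suc j) c = walk_len Z - Suc j"
    using sp_nth[OF Z] j2 by auto
  have "(Y ! i = Z ! j \<and> Y ! Suc i = Z ! Suc j) \<or> (Y ! i = Z ! Suc j \<and> Y ! Suc i = Z ! j)"
    using ei ej by (auto simp: doubleton_eq_iff)
  then have c: "Y ! i = Z ! j \<and> Y ! Suc i = Z ! Suc j"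
    using dy dz by auto
  then have ij: "i = j" using dy dz by simp
  have "Y ! Suc i \<in> V" using nth_in y i2 by blast
  moreover have "walk_len Y = dist V E a b" "walk_len Z = dist V E a c" using y z by auto
  moreover have "walk_len Y \<ge> Suc i" "walk_len Z \<ge> Suc j" using i2 j2 by (auto simp: walk_len_def)
  ultimately show ?thesis using dy dz c ij
    by (intro bexI[of _ "Y ! Suc i"] exI[of _ "Suc i"]) auto
qed

lemma reduce:
  assumes B: "bad a b c" and Y: "shortest_path V E a b Y" and Z: "shortest_path V E a c Z"
    and e: "e \<in> set (el Y)" "e \<in> set (el Z)"
  shows "\<exists>y. bad y b c \<and> D3 y b c < D3 a b c"
proof -
  have abc: "a \<in> V" "b \<in> V" "c \<in> V" using B bad_def by auto
  obtain y t where y: "y \<in> V" "t \<ge> 1" "dist V E a y = t" "dist V E y b + t = dist V E a b"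
     "dist V E y c + t = dist V E a c"
    using share[OF Y Z e] by blast
  obtain H F where HF: "H \<subseteq> V" "{y,b,c} \<subseteq> H" "F \<subseteq> E" "\<forall>e\<in>F. e \<subseteq> H" "connected_graph H F"
      "card F = steiner_dist V E {y,b,c}"
    using st_ex[of "{y,b,c}"] abc y by auto
  obtain P where P: "shortest_path V E a y P" using sp_ex abc y by metis
  note p = sp_walk[OF P]
  have yP: "y \<in> set P" using p last_in_set by (metis walk_in_def)
  have aP: "a \<in> set P" using p hd_in_set by (metis walk_in_def)
  have cu: "connected_graph (H \<union> set P) (F \<union> set (el P))"
    using conn_union[OF HF(5) walk_conn[OF p[THEN conjunct1]]] HF(2) yP by auto
  have "steiner_dist V E {a,b,c} \<le> card (F \<union> set (el P))"
  proof (rule st_le[OF _ _ _ _ cu])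
    show "H \<union> set P \<subseteq> V" using HF p by (auto simp: walk_in_def)
    show "{a, b, c} \<subseteq> H \<union> set P" using HF aP by auto
    show "F \<union> set (el P) \<subseteq> E" using HF p by (auto simp: walk_in_el)
    show "\<forall>e\<in>F \<union> set (el P). e \<subseteq> H \<union> set P" using HF el_subset by blast
  qed
  also have "\<dots> \<le> card F + card (set (el P))" by (rule card_Un_le)
  also have "\<dots> \<le> card F + t" using card_el_le[of P] p y by simp
  finally have st: "steiner_dist V E {a,b,c} \<le> steiner_dist V E {y,b,c} + t" using HF by simp
  have s: "dist V E c y = dist V E y c" "dist V E c a = dist V E a c" using dist_sym abc y by auto
  have "D3 y b c + 2 * t = D3 a b c" using y s unfolding D3_def by simp
  moreover have "D3 a b c < 2 * steiner_dist V E {a,b,c}" using B bad_def by auto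
  ultimately show ?thesis using st y abc unfolding bad_def by (intro exI[of _ y]) auto
qed

lemma bad_wit: "bad u v w \<Longrightarrow> \<exists>u' v' w'. wit u' v' w'"
proof (induction "D3 u v w" arbitrary: u v w rule: less_induct)
  case less
  have uvw: "u \<in> V" "v \<in> V" "w \<in> V" using less.prems bad_def by auto
  have s: "dist V E u w = dist V E w u" using dist_sym uvw by auto
  have b: "D3 u v w < 2 * steiner_dist V E {u, v, w}" using less.prems bad_def by auto
  show ?case
  proof (cases "2 * max (dist V E u v) (max (dist V E u w) (dist V E v w))
            < dist V E u v + dist V E u w + dist V E v w")
    case False
    have "{w, u, v} = {u, v, w}" "{u, w, v} = {u, v, w}" by auto
    then have st: "steiner_dist V E {u, v, w} \<le> dist V E u v + dist V E v w"
       "steiner_dist V E {u, v, w} \<le> dist V E w u + dist V E u v"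
       "steiner_dist V E {u, v, w} \<le> dist V E u w + dist V E w v"
      using st3_le[of u v w] st3_le[of w u v] st3_le[of u w v] uvw by metis+
    have "dist V E w v = dist V E v w" using dist_sym uvw by auto
    then show ?thesis using False st b s unfolding D3_def by (simp add: max_def split: if_splits)
  next
    case geo: True
    show ?thesis
    proof (cases "wit u v w")
      case True then show ?thesis by blast
    next
      case False
      then obtain P1 P2 P3 where P: "shortest_path V E u v P1" "shortest_path V E v w P2"
          "shortest_path V E w u P3" and
          ne: "walk_edges P1 \<inter> walk_edges P2 \<noteq> {} \<or> walk_edges P2 \<inter> walk_edges P3 \<noteq> {} \<or>
             walk_edges P1 \<inter> walk_edges P3 \<noteq> {}"
        using geo uvw unfolding wit_def by blast
      have "\<exists>y b c. bad y b c \<and> D3 y b c < D3 u v w"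
      proof -
        consider (a) "walk_edges P1 \<inter> walk_edges P2 \<noteq> {}" | (b) "walk_edges P2 \<inter> walk_edges P3 \<noteq> {}"
          | (c) "walk_edges P1 \<inter> walk_edges P3 \<noteq> {}" using ne by blast
        then show ?thesis
        proof cases
          case a
          then obtain e where e: "e \<in> set (el (rev P1))" "e \<in> set (el P2)"
            by (auto simp: set_el[symmetric] el_rev)
          have "bad v u w" using bad_perm less.prems by blast
          from reduce[OF this sp_rev[OF P(1)] P(2) e] show ?thesis using D3_perm uvw by metis
        next
          case b
          then obtain e where e: "e \<in> set (el (rev P2))" "e \<in> set (el P3)"
            by (auto simp: set_el[symmetric] el_rev)
          have "bad w v u" using bad_perm less.prems by blast
          from reduce[OF this sp_rev[OF P(2)] P(3) e] show ?thesis using D3_perm uvw by metis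
        next
          case c
          then obtain e where e: "e \<in> set (el P1)" "e \<in> set (el (rev P3))"
            by (auto simp: set_el[symmetric] el_rev)
          from reduce[OF less.prems P(1) sp_rev[OF P(3)] e] show ?thesis by metis
        qed
      qed
      then obtain y b c where "bad y b c" "D3 y b c < D3 u v w" by blast
      then show ?thesis using less.hyps by blast
    qed
  qed
qed

end

lemma el_split: "el xs = l1 @ e # l2 \<Longrightarrow> \<exists>A B. xs = A @ B \<and> A \<noteq> [] \<and> B \<noteq> [] \<and> el A = l1 \<and> el B = l2 \<and> e = {last A, hd B}"
proof (induction l1 arbitrary: xs)
  case Nil
  then obtain a b rest where xs: "xs = a # b # rest" by (cases xs rule: el.cases) auto
  then show ?case using Nil by (intro exI[of _ "[a]"] exI[of _ "b # rest"]) auto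
next
  case (Cons c l1)
  then obtain a b rest where xs: "xs = a # b # rest" by (cases xs rule: el.cases) auto
  then have c: "c = {a, b}" "el (b # rest) = l1 @ e # l2" using Cons.prems by auto
  then obtain A B where AB: "b # rest = A @ B" "A \<noteq> []" "B \<noteq> []" "el A = l1" "el B = l2" "e = {last A, hd B}"
    using Cons.IH by blast
  then obtain A' where A': "A = b # A'" by (cases A) auto
  have "el (a # A) = c # l1" using AB(4) c(1) A' by simp
  then show ?case using AB xs A' by (intro exI[of _ "a # A"] exI[of _ B]) auto
qed

lemma count_distinct: "distinct xs \<Longrightarrow> x \<in> set xs \<Longrightarrow> count_list xs x = 1"
  by (induction xs) (auto simp: count_list_0_iff)

context sgraph begin

lemma once_cycle:
  assumes w: "walk_in V E w" "hd w = last w" and e: "e \<in> set (el w)" "count_list (el w) e = 1"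
  shows "\<exists>cs. is_cycle V E cs \<and> length cs \<le> walk_len w"
proof -
  obtain l1 l2 where l: "el w = l1 @ e # l2" using e(1) split_list by metis
  have nl: "e \<notin> set l1" "e \<notin> set l2" using e(2) l by (auto simp: count_list_0_iff[symmetric])
  obtain A B where AB: "w = A @ B" "A \<noteq> []" "B \<noteq> []" "el A = l1" "el B = l2" "e = {last A, hd B}"
    using el_split[OF l] by blast
  have eE: "e \<in> E" using w e by (auto simp: walk_in_el)
  have wA: "walk_in V E A" and wB: "walk_in V E B"
    using w(1) AB l by (auto simp: walk_in_el)
  have lb: "last B = hd A" using w(2) AB by simp
  note ap = walk_append[OF wB wA lb]
  obtain ys where ys: "walk_in V E ys" "hd ys = hd B" "last ys = last A" "distinct ys"
      "set (el ys) \<subseteq> set (el (B @ tl A))" "length ys \<le> length (B @ tl A)"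
    using shortcut[OF ap(1)] ap(2,3) by metis
  have ne: "e \<notin> set (el ys)" using ys(5) ap(4) AB nl by auto
  obtain a b where ab: "a \<noteq> b" "e = {a, b}" using edgeE[OF eE] by blast
  have pq: "last A \<noteq> hd B" using ab AB(6) by (auto simp: doubleton_eq_iff)
  have ysne: "ys \<noteq> []" using ys by (auto simp: walk_in_def)
  have l3: "3 \<le> length ys"
  proof (rule ccontr)
    assume "\<not> 3 \<le> length ys"
    moreover have "0 < length ys" using ysne by simp
    ultimately have "length ys = 1 \<or> length ys = 2" by presburger
    then show False
    proof
      assume "length ys = 1"
      then obtain z where "ys = [z]" by (cases ys) auto
      then show False using ys(2,3) pq by simp
    next
      assume "length ys = 2"
      then obtain z1 z2 where z: "ys = [z1, z2]" by (cases ys; cases "tl ys") auto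
      then have "el ys = [{hd B, last A}]" using ys(2,3) by simp
      then show False using ne AB(6) by (auto simp: insert_commute)
    qed
  qed
  have "el (ys @ [hd ys]) = el ys @ [{last ys, hd ys}]" using ysne by (simp add: el_append)
  moreover have "hd ys \<in> V" using ys(1) walk_ends by blast
  ultimately have "walk_in V E (ys @ [hd ys])" using ys(1) ysne eE AB(6) ys(2,3)
    by (auto simp: walk_in_el insert_commute)
  then have "is_cycle V E ys" unfolding is_cycle_def using l3 ys(4) by simp
  moreover have "length (B @ tl A) = walk_len w"
  proof -
    show ?thesis using AB(1,2) by (cases A) (simp_all add: walk_len_def)
  qed
  ultimately show ?thesis using ys(6) by auto
qed

lemma twice:
  assumes g: "\<forall>cs. is_cycle V E cs \<longrightarrow> g \<le> length cs"
    and w: "walk_in V E w" "hd w = last w" "walk_len w < g" and e: "e \<in> set (el w)"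
  shows "2 \<le> count_list (el w) e"
proof (rule ccontr)
  assume "\<not> ?thesis"
  moreover have "count_list (el w) e \<noteq> 0" using e by (simp add: count_list_0_iff)
  ultimately have "count_list (el w) e = 1" by simp
  then obtain cs where "is_cycle V E cs" "length cs \<le> walk_len w" using once_cycle w e by blast
  then show False using g w by fastforce
qed

lemma count_bound:
  assumes "\<forall>e\<in>set xs. 2 \<le> count_list xs e"
  shows "2 * card (set xs) \<le> length xs"
proof -
  have "2 * card (set xs) = (\<Sum>e\<in>set xs. 2)" by simp
  also have "\<dots> \<le> (\<Sum>e\<in>set xs. count_list xs e)" using assms by (intro sum_mono) auto
  also have "\<dots> = length xs" by (rule sum_count_set) auto
  finally show ?thesis .
qed

lemma tree_walk:
  assumes nc: "\<not> (\<exists>cs. is_cycle V E cs)" and w: "walk_in V E w" "hd w = last w"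
  shows "2 * card (set (el w)) \<le> walk_len w"
proof -
  have "\<forall>cs. is_cycle V E cs \<longrightarrow> walk_len w + 1 \<le> length cs" using nc by blast
  then have "\<forall>e\<in>set (el w). 2 \<le> count_list (el w) e" using twice[OF _ w] by simp
  then show ?thesis using count_bound walk_len_el by metis
qed

lemma tree_eq:
  assumes nc: "\<not> (\<exists>cs. is_cycle V E cs)" and S: "S \<subseteq> V"
  shows "tsp V E S = 2 * steiner_dist V E S"
proof -
  obtain w where w: "walk_in V E w" "hd w = last w" "S \<subseteq> set w" "walk_len w = tsp V E S"
    using tsp_ex[OF S] by blast
  have "steiner_dist V E S \<le> card (set (el w))" using st_walk w by blast
  then have "2 * steiner_dist V E S \<le> tsp V E S" using tree_walk[OF nc w(1,2)] w(4) by linarith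
  then show ?thesis using tsp_le_st[OF S] by linarith
qed

lemma extend:
  assumes w: "walk_in V E w" "hd w = last w" and X: "X \<subseteq> set w" "card X \<le> k" and k: "k \<le> card V"
    and lt1: "walk_len w < 2 * steiner_dist V E X" and lt2: "walk_len w + 2 < 2 * card (set w)"
  shows "\<exists>S\<subseteq>V. card S = k \<and> tsp V E S < 2 * steiner_dist V E S"
proof (cases "k \<le> card (set w)")
  case True
  have fX: "finite X" using X(1) finite_subset by blast
  have "card (set w - X) = card (set w) - card X" using X(1) fX by (simp add: card_Diff_subset)
  then have "k - card X \<le> card (set w - X)" using True by simp
  then obtain T where T: "T \<subseteq> set w - X" "card T = k - card X" "finite T"
    using obtain_subset_with_card_n by metis
  define S where "S = X \<union> T"
  have cS: "card S = k" unfolding S_def using T fX X(2) by (subst card_Un_disjoint) auto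
  have sw: "S \<subseteq> set w" unfolding S_def using T X by auto
  have SV: "S \<subseteq> V" using sw w(1) by (auto simp: walk_in_def)
  have "tsp V E S \<le> walk_len w" using tsp_le[OF w sw] .
  also have "\<dots> < 2 * steiner_dist V E X" by (rule lt1)
  also have "\<dots> \<le> 2 * steiner_dist V E S" using st_mono[of X S] SV unfolding S_def by auto
  finally show ?thesis using cS SV by blast
next
  case False
  define j where "j = k - card (set w)"
  have "j \<le> card V - card (set w)" unfolding j_def using k by simp
  then obtain w' where w': "walk_in V E w'" "hd w' = hd w" "last w' = last w"
      "card (set w') = card (set w) + j" "walk_len w' = walk_len w + 2 * j"
    using greedy[OF cg finV w(1)] by blast
  have cS: "card (set w') = k" using w'(4) False unfolding j_def by simp
  have SV: "set w' \<subseteq> V" using w'(1) by (auto simp: walk_in_def)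
  have "tsp V E (set w') \<le> walk_len w'" using tsp_le[OF w'(1)] w' w(2) by simp
  moreover have "k \<le> steiner_dist V E (set w') + 1" using st_card[OF SV] cS by simp
  moreover have "walk_len w' + 2 < 2 * k" using w'(5) lt2 False unfolding j_def by simp
  ultimately show ?thesis using cS SV by (intro exI[of _ "set w'"]) auto
qed

end

context sgraph begin

lemma cycle_facts:
  assumes c: "is_cycle V E cs"
  shows "walk_in V E (cs @ [hd cs])" "hd (cs @ [hd cs]) = last (cs @ [hd cs])"
    "set (cs @ [hd cs]) = set cs" "walk_len (cs @ [hd cs]) = length cs"
    "distinct (el (cs @ [hd cs]))" "length (cs @ [hd cs]) = Suc (length cs)"
    "3 \<le> length cs" "distinct cs" "set cs \<subseteq> V"
proof -
  have l3: "3 \<le> length cs" and d: "distinct cs" and w: "walk_in V E (cs @ [hd cs])"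
    using c unfolding is_cycle_def by auto
  have ne: "cs \<noteq> []" using l3 by auto
  show "walk_in V E (cs @ [hd cs])" "3 \<le> length cs" "distinct cs" by fact+
  show "hd (cs @ [hd cs]) = last (cs @ [hd cs])" using ne by simp
  show "set (cs @ [hd cs]) = set cs" using ne by auto
  show "walk_len (cs @ [hd cs]) = length cs" by (simp add: walk_len_def)
  show "length (cs @ [hd cs]) = Suc (length cs)" by simp
  show "set cs \<subseteq> V" using w by (auto simp: walk_in_def)
  have e: "el (cs @ [hd cs]) = el cs @ [{last cs, hd cs}]" using ne by (simp add: el_append)
  have "{last cs, hd cs} \<notin> set (el cs)"
  proof
    assume "{last cs, hd cs} \<in> set (el cs)"
    then obtain i where i: "i < length (el cs)" "{last cs, hd cs} = el cs ! i" by (auto simp: in_set_conv_nth)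
    then have i2: "Suc i < length cs" by (simp add: length_el)
    then have "{last cs, hd cs} = {cs ! i, cs ! Suc i}" using i nth_el by metis
    moreover have "last cs = cs ! (length cs - 1)" "hd cs = cs ! 0" using ne
      by (simp_all add: last_conv_nth hd_conv_nth)
    ultimately have "(cs ! (length cs - 1) = cs ! i \<and> cs ! 0 = cs ! Suc i) \<or>
        (cs ! (length cs - 1) = cs ! Suc i \<and> cs ! 0 = cs ! i)"
      by (auto simp: doubleton_eq_iff)
    moreover have L: "length cs - 1 < length cs" "i < length cs" "0 < length cs" "Suc i < length cs" using i2 by auto
    moreover have "cs ! (length cs - 1) \<noteq> cs ! i" using nth_eq_iff_index_eq[OF d L(1) L(2)] i2 by simp
    moreover have "cs ! 0 = cs ! i \<Longrightarrow> i = 0" using nth_eq_iff_index_eq[OF d L(3) L(2)] by simp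
    moreover have "cs ! (length cs - 1) = cs ! Suc i \<Longrightarrow> length cs - 1 = Suc i"
      using nth_eq_iff_index_eq[OF d L(1) L(4)] by simp
    ultimately show False using l3 by auto
  qed
  then show "distinct (el (cs @ [hd cs]))" using e distinct_el[OF d] by simp
qed

lemma arc_cover:
  assumes g: "\<forall>cs. is_cycle V E cs \<longrightarrow> g \<le> length cs"
    and A: "walk_in V E A" "hd A = a" "last A = b" "distinct (el A)"
    and Ra: "walk_in V E Ra" "hd Ra = x" "last Ra = a"
    and Rb: "walk_in V E Rb" "hd Rb = x" "last Rb = b"
    and len: "walk_len A + walk_len Ra + walk_len Rb < g"
  shows "set (el A) \<subseteq> set (el Ra) \<union> set (el Rb)"
proof
  fix e assume e: "e \<in> set (el A)"
  have l1: "last A = hd (rev Rb)" using A Rb by (simp add: hd_rev)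
  note a1 = walk_append[OF A(1) walk_rev[OF Rb(1)] l1]
  have l2: "last (A @ tl (rev Rb)) = hd Ra" using a1(3) Ra Rb by (simp add: last_rev)
  note a2 = walk_append[OF a1(1) Ra(1) l2]
  let ?Z = "(A @ tl (rev Rb)) @ tl Ra"
  have Z: "walk_in V E ?Z" "hd ?Z = last ?Z" "walk_len ?Z < g"
    using a1 a2 A Ra len walk_len_rev[of Rb] by auto
  have eZ: "e \<in> set (el ?Z)" using a2(4) a1(4) e by simp
  have "2 \<le> count_list (el ?Z) e" using twice[OF g Z eZ] .
  moreover have "count_list (el ?Z) e = 1 + count_list (el Rb) e + count_list (el Ra) e"
    using a2(4) a1(4) count_distinct[OF A(4) e] by (simp add: el_rev)
  ultimately have "count_list (el Rb) e \<noteq> 0 \<or> count_list (el Ra) e \<noteq> 0" by linarith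
  then show "e \<in> set (el Ra) \<union> set (el Rb)" by (auto simp: count_list_0_iff)
qed

lemma nontree:
  assumes nt: "\<not> is_tree V E" and k: "4 \<le> k" "k \<le> card V"
  shows "\<exists>S\<subseteq>V. card S = k \<and> tsp V E S < 2 * steiner_dist V E S"
proof -
  have "\<exists>cs. is_cycle V E cs" using nt cg unfolding is_tree_def by blast
  then have ex: "\<exists>n cs. is_cycle V E cs \<and> length cs = n" by blast
  define g where "g = (LEAST n. \<exists>cs. is_cycle V E cs \<and> length cs = n)"
  obtain cs where cs: "is_cycle V E cs" "length cs = g" using LeastI_ex[OF ex] unfolding g_def by blast
  have gmin: "\<forall>cs. is_cycle V E cs \<longrightarrow> g \<le> length cs" unfolding g_def by (auto intro: Least_le)
  note cf = cycle_facts[OF cs(1)]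
  define wc where "wc = cs @ [hd cs]"
  have wc: "walk_in V E wc" "hd wc = last wc" "set wc = set cs" "walk_len wc = g" "distinct (el wc)"
     "length wc = Suc g" using cf cs(2) unfolding wc_def by auto
  have g3: "3 \<le> g" using cf cs by simp
  show ?thesis
  proof (cases "g \<le> k")
    case True
    have cX: "card (set cs) = g" using cf(8) cs(2) by (simp add: distinct_card)
    have "g \<le> steiner_dist V E (set cs) + 1" using st_card[OF cf(9)] cX by simp
    then have "walk_len wc < 2 * steiner_dist V E (set cs)" using wc g3 by simp
    moreover have "walk_len wc + 2 < 2 * card (set wc)" using wc cX g3 by simp
    ultimately show ?thesis using extend[OF wc(1,2), of "set cs" k] wc(3) cX True k(2) by simp
  next
    case False
    then have g5: "5 \<le> g" using k by simp
    define i0 where "i0 = g div 3"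
    define j0 where "j0 = 2 * g div 3"
    have ar: "i0 \<le> j0" "j0 \<le> g" "2 * i0 < g" "2 * (j0 - i0) < g" "2 * (g - j0) < g" "0 < i0"
    proof -
      have h1: "g = 3 * i0 + g mod 3" "g mod 3 < 3" unfolding i0_def by simp_all
      have h2: "2 * g = 3 * j0 + (2 * g) mod 3" "(2 * g) mod 3 < 3" unfolding j0_def by simp_all
      show "i0 \<le> j0" "j0 \<le> g" "2 * i0 < g" "2 * (j0 - i0) < g" "2 * (g - j0) < g" "0 < i0"
        using h1 h2 g5 by linarith+
    qed
    define u where "u = wc ! 0"
    define v where "v = wc ! i0"
    define w where "w = wc ! j0"
    have wcg: "wc ! g = u" using wc(1,2,6) walk_hd_nth walk_last_nth unfolding u_def by (metis diff_Suc_1)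
    have uvwV: "u \<in> V" "v \<in> V" "w \<in> V" unfolding u_def v_def w_def using nth_in[OF wc(1)] wc(6) ar by auto
    have uvwS: "{u, v, w} \<subseteq> set wc" unfolding u_def v_def w_def using wc(6) ar by auto
    have c3: "card {u, v, w} \<le> k" using card_length[of "[u,v,w]"] k by simp
    have main: "g < 2 * steiner_dist V E {u, v, w}"
    proof (rule ccontr)
      assume "\<not> ?thesis"
      then have le: "2 * steiner_dist V E {u, v, w} \<le> g" by simp
      obtain H F where HF: "H \<subseteq> V" "{u,v,w} \<subseteq> H" "F \<subseteq> E" "connected_graph H F"
          "card F = steiner_dist V E {u,v,w}"
        using st_ex[of "{u,v,w}"] uvwV by auto
      have "u \<in> H" "v \<in> H" "w \<in> H" using HF(2) by auto
      then obtain x where x: "x \<in> V" "dist V E u x + dist V E x v + dist V E w x \<le> card F"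
        using median[OF HF(1,3,4)] by blast
      obtain Ru where Ru: "shortest_path V E x u Ru" using sp_ex[OF x(1) uvwV(1)] by blast
      obtain Rv where Rv: "shortest_path V E x v Rv" using sp_ex[OF x(1) uvwV(2)] by blast
      obtain Rw where Rw: "shortest_path V E x w Rw" using sp_ex[OF x(1) uvwV(3)] by blast
      have ru: "walk_in V E Ru" "hd Ru = x" "last Ru = u" "walk_len Ru = dist V E x u" using sp_walk[OF Ru] by auto
      have rv: "walk_in V E Rv" "hd Rv = x" "last Rv = v" "walk_len Rv = dist V E x v" using sp_walk[OF Rv] by auto
      have rw: "walk_in V E Rw" "hd Rw = x" "last Rw = w" "walk_len Rw = dist V E x w" using sp_walk[OF Rw] by auto
      have s: "dist V E x u = dist V E u x" "dist V E x w = dist V E w x" using dist_sym x uvwV by auto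
      have lens: "2 * (walk_len Ru + walk_len Rv + walk_len Rw) \<le> g"
        using ru rv rw s x(2) HF(5) le by simp
      define A1 where "A1 = drop 0 (take (Suc i0) wc)"
      define A2 where "A2 = drop i0 (take (Suc j0) wc)"
      define A3 where "A3 = drop j0 (take (Suc g) wc)"
      have i0l: "i0 < length wc" "j0 < length wc" "g < length wc" using ar wc(6) by auto
      note s1 = subwalk[OF wc(1) le0 i0l(1), folded A1_def]
      note s2 = subwalk[OF wc(1) ar(1) i0l(2), folded A2_def]
      note s3 = subwalk[OF wc(1) ar(2) i0l(3), folded A3_def]
      have A3': "A3 = drop j0 wc" unfolding A3_def using wc(6) by simp
      have e1: "el wc = el (take (Suc j0) wc) @ el (drop j0 wc)" using el_take_drop i0l by blast
      have e2: "el (take (Suc j0) wc) = el (take (Suc i0) (take (Suc j0) wc)) @ el A2"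
        unfolding A2_def using el_take_drop[of i0 "take (Suc j0) wc"] i0l ar by simp
      have "take (Suc i0) (take (Suc j0) wc) = A1" unfolding A1_def using ar by (simp add: min_def)
      then have elwc: "el wc = el A1 @ el A2 @ el A3" using e1 e2 A3' by simp
      then have d: "distinct (el A1)" "distinct (el A2)" "distinct (el A3)" using wc(5) by auto
      have h1: "hd A1 = u" "last A1 = v" using s1 unfolding u_def v_def by simp_all
      have h2: "hd A2 = v" "last A2 = w" using s2 unfolding v_def w_def by simp_all
      have h3: "hd A3 = w" "last A3 = u" using s3 wcg unfolding w_def by simp_all
      have l1: "walk_len A1 + walk_len Ru + walk_len Rv < g" using s1 ar lens by simp
      have l2: "walk_len A2 + walk_len Rv + walk_len Rw < g" using s2 ar lens by simp
      have l3: "walk_len A3 + walk_len Rw + walk_len Ru < g" using s3 ar lens by simp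
      have c1: "set (el A1) \<subseteq> set (el Ru) \<union> set (el Rv)"
        using arc_cover[OF gmin s1(1) h1 d(1) ru(1-3) rv(1-3) l1] .
      have c2: "set (el A2) \<subseteq> set (el Rv) \<union> set (el Rw)"
        using arc_cover[OF gmin s2(1) h2 d(2) rv(1-3) rw(1-3) l2] .
      have c3: "set (el A3) \<subseteq> set (el Rw) \<union> set (el Ru)"
        using arc_cover[OF gmin s3(1) h3 d(3) rw(1-3) ru(1-3) l3] .
      have "set (el wc) \<subseteq> set (el Ru) \<union> set (el Rv) \<union> set (el Rw)" using elwc c1 c2 c3 by auto
      then have "card (set (el wc)) \<le> card (set (el Ru) \<union> set (el Rv) \<union> set (el Rw))"
        by (rule card_mono[rotated]) simp
      also have "\<dots> \<le> card (set (el Ru)) + card (set (el Rv)) + card (set (el Rw))"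
        by (meson add_le_mono1 card_Un_le le_trans)
      also have "\<dots> \<le> walk_len Ru + walk_len Rv + walk_len Rw"
        using card_el_le[of Ru] card_el_le[of Rv] card_el_le[of Rw] by linarith
      finally have "card (set (el wc)) \<le> walk_len Ru + walk_len Rv + walk_len Rw" .
      moreover have "card (set (el wc)) = g" using card_el_distinct wc
        by (simp add: distinct_card walk_len_el[symmetric])
      ultimately have "g \<le> walk_len Ru + walk_len Rv + walk_len Rw" by simp
      then have "2 * g \<le> g" using lens by simp
      then show False using g5 by simp
    qed
    have "walk_len wc + 2 < 2 * card (set wc)" using wc g3 cf(8) cs(2) by (simp add: distinct_card)
    then show ?thesis using extend[OF wc(1,2) uvwS c3 k(2)] main wc(4) by simp
  qed
qed

end

context sgraph begin

lemma k3_iff: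
  "(\<forall>S\<in>{S. S \<subseteq> V \<and> card S = 3}. tsp V E S = 2 * steiner_dist V E S) \<longleftrightarrow>
   \<not> (\<exists>u\<in>V. \<exists>v\<in>V. \<exists>w\<in>V.
          2 * max (dist V E u v) (max (dist V E u w) (dist V E v w))
            < dist V E u v + dist V E u w + dist V E v w \<and>
          (\<forall>P1 P2 P3. shortest_path V E u v P1 \<and> shortest_path V E v w P2 \<and>
              shortest_path V E w u P3 \<longrightarrow>
             walk_edges P1 \<inter> walk_edges P2 = {} \<and> walk_edges P2 \<inter> walk_edges P3 = {} \<and>
             walk_edges P1 \<inter> walk_edges P3 = {}))"
  (is "?A \<longleftrightarrow> \<not> ?B")
proof
  assume A: ?A
  show "\<not> ?B"
  proof
    assume ?B
    then obtain u v w where W: "wit u v w" unfolding wit_def by blast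
    have uvw: "u \<in> V" "v \<in> V" "w \<in> V" using W wit_def by auto
    have lt: "2 * max (dist V E u v) (max (dist V E u w) (dist V E v w))
            < dist V E u v + dist V E u w + dist V E v w" using W wit_def by blast
    have s: "dist V E v u = dist V E u v" "dist V E w u = dist V E u w" "dist V E w v = dist V E v w"
      using dist_sym uvw by auto
    have z: "dist V E u u = 0" "dist V E v v = 0" "dist V E w w = 0" using dist_self uvw by auto
    have m: "dist V E u v \<le> max (dist V E u v) (max (dist V E u w) (dist V E v w))"
       "dist V E u w \<le> max (dist V E u v) (max (dist V E u w) (dist V E v w))"
       "dist V E v w \<le> max (dist V E u v) (max (dist V E u w) (dist V E v w))" by simp_all
    have "u \<noteq> v"
    proof
      assume "u = v"
      then have "dist V E u v = 0" "dist V E v w = dist V E u w" using z by simp_all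
      then show False using lt m by linarith
    qed
    moreover have "u \<noteq> w"
    proof
      assume "u = w"
      then have "dist V E u w = 0" "dist V E v w = dist V E u v" using z s by simp_all
      then show False using lt m by linarith
    qed
    moreover have "v \<noteq> w"
    proof
      assume "v = w"
      then have "dist V E v w = 0" "dist V E u w = dist V E u v" using z by simp_all
      then show False using lt m by linarith
    qed
    ultimately have "card {u, v, w} = 3" by simp
    then have "tsp V E {u, v, w} = 2 * steiner_dist V E {u, v, w}" using A uvw by auto
    moreover have "tsp V E {u, v, w} = D3 u v w" using tsp_triple uvw unfolding D3_def by simp
    ultimately show False using wit_strict[OF W] by simp
  qed
next
  assume nB: "\<not> ?B"
  show ?A
  proof
    fix S assume S: "S \<in> {S. S \<subseteq> V \<and> card S = 3}"
    then obtain u v w where uvw: "S = {u, v, w}" using card_3_iff by (metis (mono_tags, lifting) mem_Collect_eq)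
    have V: "u \<in> V" "v \<in> V" "w \<in> V" using S uvw by auto
    have le: "tsp V E S \<le> 2 * steiner_dist V E S" using tsp_le_st S by auto
    show "tsp V E S = 2 * steiner_dist V E S"
    proof (rule ccontr)
      assume "tsp V E S \<noteq> 2 * steiner_dist V E S"
      then have "tsp V E S < 2 * steiner_dist V E S" using le by simp
      moreover have "tsp V E S = D3 u v w" using tsp_triple V uvw unfolding D3_def by simp
      ultimately have "bad u v w" using V uvw unfolding bad_def by simp
      then obtain u' v' w' where "wit u' v' w'" using bad_wit by blast
      then show False using nB unfolding wit_def by blast
    qed
  qed
qed

lemma k2_all: "\<forall>S\<in>{S. S \<subseteq> V \<and> card S = 2}. tsp V E S = 2 * steiner_dist V E S"
proof
  fix S assume S: "S \<in> {S. S \<subseteq> V \<and> card S = 2}"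
  then obtain u v where "S = {u, v}" using card_2_iff by (metis (mono_tags, lifting) mem_Collect_eq)
  then show "tsp V E S = 2 * steiner_dist V E S" using pair_eq S by auto
qed

lemma k4_iff:
  assumes "4 \<le> k" "k \<le> card V"
  shows "(\<forall>S\<in>{S. S \<subseteq> V \<and> card S = k}. tsp V E S = 2 * steiner_dist V E S) \<longleftrightarrow> is_tree V E"
proof
  assume A: "\<forall>S\<in>{S. S \<subseteq> V \<and> card S = k}. tsp V E S = 2 * steiner_dist V E S"
  show "is_tree V E"
  proof (rule ccontr)
    assume "\<not> is_tree V E"
    then obtain S where "S \<subseteq> V" "card S = k" "tsp V E S < 2 * steiner_dist V E S"
      using nontree assms by blast
    then show False using A by auto
  qed
next
  assume "is_tree V E"
  then have "\<not> (\<exists>cs. is_cycle V E cs)" unfolding is_tree_def by blast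
  then show "\<forall>S\<in>{S. S \<subseteq> V \<and> card S = k}. tsp V E S = 2 * steiner_dist V E S"
    using tree_eq by blast
qed

lemma sum_parts:
  shows "W_tsp V E k \<le> 2 * W_steiner V E k"
    "W_tsp V E k = 2 * W_steiner V E k \<longleftrightarrow>
      (\<forall>S\<in>{S. S \<subseteq> V \<and> card S = k}. tsp V E S = 2 * steiner_dist V E S)"
proof -
  let ?K = "{S. S \<subseteq> V \<and> card S = k}"
  have "?K \<subseteq> Pow V" by auto
  then have fin: "finite ?K" using finV finite_subset by blast
  have le: "\<forall>S\<in>?K. tsp V E S \<le> 2 * steiner_dist V E S" using tsp_le_st by auto
  have eq2: "2 * W_steiner V E k = (\<Sum>S\<in>?K. 2 * steiner_dist V E S)"
    unfolding W_steiner_def by (simp add: sum_distrib_left)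
  show "W_tsp V E k \<le> 2 * W_steiner V E k"
    unfolding eq2 unfolding W_tsp_def using le by (intro sum_mono) auto
  show "W_tsp V E k = 2 * W_steiner V E k \<longleftrightarrow> (\<forall>S\<in>?K. tsp V E S = 2 * steiner_dist V E S)"
  proof
    assume e: "W_tsp V E k = 2 * W_steiner V E k"
    show "\<forall>S\<in>?K. tsp V E S = 2 * steiner_dist V E S"
    proof (rule ccontr)
      assume "\<not> ?thesis"
      then obtain S where "S \<in> ?K" "tsp V E S < 2 * steiner_dist V E S" using le by force
      then have "(\<Sum>S\<in>?K. tsp V E S) < (\<Sum>S\<in>?K. 2 * steiner_dist V E S)"
        using le fin by (intro sum_strict_mono_ex1) auto
      then show False using e eq2 unfolding W_tsp_def by simp
    qed
  next
    assume "\<forall>S\<in>?K. tsp V E S = 2 * steiner_dist V E S"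
    then show "W_tsp V E k = 2 * W_steiner V E k" unfolding eq2 W_tsp_def by (intro sum.cong) auto
  qed
qed

end

theorem theorem1:
  fixes V :: "'a set" and E :: "'a set set" and n k :: nat
  assumes "simple_graph V E" and "connected_graph V E" and "card V = n"
    and "2 \<le> k" and "k \<le> n"
  shows "W_tsp V E k \<le> 2 * W_steiner V E k \<and>
    (W_tsp V E k = 2 * W_steiner V E k \<longleftrightarrow>
      (k = 2 \<or>
       (k = 3 \<and> \<not> (\<exists>u\<in>V. \<exists>v\<in>V. \<exists>w\<in>V.
          2 * max (dist V E u v) (max (dist V E u w) (dist V E v w))
            < dist V E u v + dist V E u w + dist V E v w \<and>
          (\<forall>P1 P2 P3. shortest_path V E u v P1 \<and> shortest_path V E v w P2 \<and>
              shortest_path V E w u P3 \<longrightarrow>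
             walk_edges P1 \<inter> walk_edges P2 = {} \<and> walk_edges P2 \<inter> walk_edges P3 = {} \<and>
             walk_edges P1 \<inter> walk_edges P3 = {}))) \<or>
       (4 \<le> k \<and> is_tree V E)))"
proof -
  interpret sgraph V E using assms(1,2) by unfold_locales
  note sp = sum_parts[of k]
  have "k = 2 \<or> k = 3 \<or> 4 \<le> k" using assms(4) by auto
  moreover have ?thesis if "k = 2" using sp k2_all that by simp
  moreover have ?thesis if "k = 3" using sp k3_iff that by simp
  moreover have ?thesis if "4 \<le> k" using sp k4_iff[OF that] that assms(3,5) by simp
  ultimately show ?thesis by blast
qed


end
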